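(* Let $n\geqslant 1$ and $w\in W_n$ with $w\neq e$. Then $|\Delta|^{\mathrm{In}(w)}:=\bigcup_{s\in\mathrm{In}(w)}|\Delta|_s$ is $(n-2)$-connected, where $\mathrm{In}(w)=\{s\in S_n:\ell(ws)<\ell(w)\}$.
   Context: Standing setup: $\Gamma_1$ is an arbitrary finite Coxeter diagram with a preferred vertex $s_1$ (edge $\{s,t\}$ iff $m_{st}\geqslant3$; unlabelled edge means $m_{st}=3$, no edge means $m_{st}=2$). For $n\geqslant 2$, $\Gamma_n$ is obtained from $\Gamma_{n-1}$ by adding one new vertex $s_n$ joined by an unlabelled edge to $s_{n-1}$ and to no other vertex. $\Gamma_0$ is $\Gamma_1$ with $s_1$ deleted; $\Gamma_{-1}$ is $\Gamma_1$ with $s_1$ and all its neighbours deleted. For $n\geqslant -1$, $S_n$ is the vertex set of $\Gamma_n$ and $W_n$ the Coxeter group, with word length $\ell$ with respect to $S_n$. $|\Delta|$ is a topological $n$-simplex with vertices $a_0,\dots,a_n$, with mirrors: for $s\in S_i\setminus S_{i-1}$ ($0\leqslant i\leqslant n$), $|\Delta|_s$ is the facet opposite $a_i$; for $s\in S_{-1}$, $|\Delta|_s=|\Delta|$. A space is $(-1)$-connected iff nonempty. *)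

theory Defs
  imports "HOL-Analysis.Analysis" "HOL-Library.Extended_Nat"
begin

text \<open>A Coxeter diagram on a finite vertex set V is given by its Coxeter matrix
  m :: vertex => vertex => enat (infinity allowed): m s s = 1, symmetric,
  m s t >= 2 for s ~= t. Edge {s,t} iff m s t >= 3.\<close>

definition coxeter_diagram :: "'v set \<Rightarrow> ('v \<Rightarrow> 'v \<Rightarrow> enat) \<Rightarrow> bool" where
  "coxeter_diagram V m \<longleftrightarrow> finite V \<and> (\<forall>s\<in>V. m s s = 1)
     \<and> (\<forall>s\<in>V. \<forall>t\<in>V. m s t = m t s)
     \<and> (\<forall>s\<in>V. \<forall>t\<in>V. s \<noteq> t \<longrightarrow> 2 \<le> m s t)"

definition alt_word :: "'g \<Rightarrow> 'g \<Rightarrow> nat \<Rightarrow> 'g list" where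
  "alt_word s t k = concat (replicate k [s, t])"

definition cox_step :: "'g set \<Rightarrow> ('g \<Rightarrow> 'g \<Rightarrow> enat) \<Rightarrow> 'g list \<Rightarrow> 'g list \<Rightarrow> bool" where
  "cox_step S m u v \<longleftrightarrow>
     (\<exists>x y s. s \<in> S \<and> u = x @ [s, s] @ y \<and> v = x @ y) \<or>
     (\<exists>x y s t k. s \<in> S \<and> t \<in> S \<and> m s t = enat k \<and> u = x @ alt_word s t k @ y \<and> v = x @ y)"

definition cox_rel :: "'g set \<Rightarrow> ('g \<Rightarrow> 'g \<Rightarrow> enat) \<Rightarrow> ('g list \<times> 'g list) set" where
  "cox_rel S m = {(u, v). u \<in> lists S \<and> v \<in> lists S \<and> equivclp (cox_step S m) u v}"

definition cox_group :: "'g set \<Rightarrow> ('g \<Rightarrow> 'g \<Rightarrow> enat) \<Rightarrow> 'g list set set" where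
  "cox_group S m = lists S // cox_rel S m"

definition cox_unit :: "'g set \<Rightarrow> ('g \<Rightarrow> 'g \<Rightarrow> enat) \<Rightarrow> 'g list set" where
  "cox_unit S m = cox_rel S m `` {[]}"

definition cox_rmul :: "'g set \<Rightarrow> ('g \<Rightarrow> 'g \<Rightarrow> enat) \<Rightarrow> 'g list set \<Rightarrow> 'g \<Rightarrow> 'g list set" where
  "cox_rmul S m w s = cox_rel S m `` ((\<lambda>u. u @ [s]) ` w)"

definition cox_length :: "'g list set \<Rightarrow> nat" where
  "cox_length w = (LEAST k. \<exists>u\<in>w. length u = k)"

definition descent_set :: "'g set \<Rightarrow> ('g \<Rightarrow> 'g \<Rightarrow> enat) \<Rightarrow> 'g list set \<Rightarrow> 'g set" where
  "descent_set S m w = {s \<in> S. cox_length (cox_rmul S m w s) < cox_length w}"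

text \<open>Vertices of Gamma_n: Inl a for a vertex a of Gamma_1 (s_1 = Inl v1),
  and Inr i for the new vertex s_i, 2 <= i <= n.\<close>

definition Sn :: "'v set \<Rightarrow> nat \<Rightarrow> ('v + nat) set" where
  "Sn V n = Inl ` V \<union> Inr ` {2..n}"

definition gamma_m :: "('v \<Rightarrow> 'v \<Rightarrow> enat) \<Rightarrow> 'v \<Rightarrow> ('v + nat) \<Rightarrow> ('v + nat) \<Rightarrow> enat" where
  "gamma_m m v1 x y =
     (case (x, y) of
        (Inl a, Inl b) \<Rightarrow> m a b
      | (Inr i, Inr j) \<Rightarrow> (if i = j then 1 else if i = Suc j \<or> j = Suc i then 3 else 2)
      | (Inl a, Inr j) \<Rightarrow> (if a = v1 \<and> j = 2 then 3 else 2)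
      | (Inr i, Inl b) \<Rightarrow> (if b = v1 \<and> i = 2 then 3 else 2))"

definition Sminus1 :: "'v set \<Rightarrow> ('v \<Rightarrow> 'v \<Rightarrow> enat) \<Rightarrow> 'v \<Rightarrow> ('v + nat) set" where
  "Sminus1 V m v1 = Inl ` {a \<in> V. a \<noteq> v1 \<and> \<not> (3 \<le> m v1 a)}"

text \<open>For s in S_i - S_{i-1} (0 <= i), the index i.\<close>
definition vtx_index :: "'v \<Rightarrow> ('v + nat) \<Rightarrow> nat" where
  "vtx_index v1 x = (case x of Inl a \<Rightarrow> (if a = v1 then 1 else 0) | Inr i \<Rightarrow> i)"

definition std_simplex :: "nat \<Rightarrow> (nat \<Rightarrow> real) set" where
  "std_simplex n = {x. (\<forall>i. 0 \<le> x i \<and> x i \<le> 1) \<and> (\<forall>i>n. x i = 0) \<and> (\<Sum>i\<le>n. x i) = 1}"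

definition mirror :: "'v set \<Rightarrow> ('v \<Rightarrow> 'v \<Rightarrow> enat) \<Rightarrow> 'v \<Rightarrow> nat \<Rightarrow> ('v + nat) \<Rightarrow> (nat \<Rightarrow> real) set" where
  "mirror V m v1 n s = (if s \<in> Sminus1 V m v1 then std_simplex n
                        else {x \<in> std_simplex n. x (vtx_index v1 s) = 0})"

definition k_connected :: "int \<Rightarrow> 'a topology \<Rightarrow> bool" where
  "k_connected k X \<longleftrightarrow> topspace X \<noteq> {} \<and>
     (\<forall>i::nat. int i \<le> k \<longrightarrow>
        (\<forall>f. continuous_map (nsphere i) X f \<longrightarrow>
           (\<exists>c\<in>topspace X. homotopic_with (\<lambda>_. True) (nsphere i) X f (\<lambda>_. c))))"

end

theory Submission
  imports Defs
begin


lemma cox_rel_refl: "u \<in> lists S \<Longrightarrow> (u,u) \<in> cox_rel S m"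
  by (simp add: cox_rel_def)

lemma descent_nonempty:
  assumes w: "w \<in> cox_group S m" and ne: "w \<noteq> cox_unit S m"
  shows "\<exists>s. s \<in> descent_set S m w"
proof -
  obtain u0 where u0: "u0 \<in> lists S" and wq: "w = cox_rel S m `` {u0}"
    using w unfolding cox_group_def by (metis quotientE)
  have "(u0,u0) \<in> cox_rel S m" using u0 by (rule cox_rel_refl)
  hence "u0 \<in> w" using wq by simp
  hence ex: "\<exists>u\<in>w. length u = length u0" by (intro bexI) simp_all
  have "\<exists>u\<in>w. length u = (LEAST k. \<exists>u\<in>w. length u = k)"
    by (rule LeastI_ex) (rule exI, rule ex)
  then obtain u where uw: "u \<in> w" and ul: "length u = cox_length w"
    unfolding cox_length_def by (elim bexE) simp
  have "(u0, u) \<in> cox_rel S m" using uw wq by simp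
  hence uS: "u \<in> lists S" and equ: "equivclp (cox_step S m) u0 u"
    unfolding cox_rel_def by simp_all
  have "u \<noteq> []"
  proof
    assume "u = []"
    hence e: "equivclp (cox_step S m) u0 []" using equ by simp
    have "w = cox_unit S m"
    proof (intro set_eqI iffI)
      fix x assume "x \<in> w"
      hence "(u0,x) \<in> cox_rel S m" using wq by simp
      hence "x \<in> lists S" "equivclp (cox_step S m) u0 x" unfolding cox_rel_def by simp_all
      moreover have "equivclp (cox_step S m) [] u0" using e by (rule equivclp_sym)
      ultimately have "equivclp (cox_step S m) [] x" using equivclp_trans by metis
      with \<open>x \<in> lists S\<close> show "x \<in> cox_unit S m" unfolding cox_unit_def cox_rel_def by simp
    next
      fix x assume "x \<in> cox_unit S m"
      hence "x \<in> lists S" "equivclp (cox_step S m) [] x" unfolding cox_unit_def cox_rel_def by simp_all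
      hence "equivclp (cox_step S m) u0 x" using e equivclp_trans by metis
      with \<open>x \<in> lists S\<close> u0 show "x \<in> w" unfolding wq cox_rel_def by simp
    qed
    with ne show False by simp
  qed
  then obtain u' s where us: "u = u' @ [s]" by (metis rev_exhaust)
  have sS: "s \<in> S" and u'S: "u' \<in> lists S" using uS us by simp_all
  have "cox_step S m (u' @ [s, s]) u'"
    unfolding cox_step_def apply (rule disjI1) apply (rule exI[of _ u']) apply (rule exI[of _ "[]"]) apply (rule exI[of _ s]) using sS by simp
  hence "equivclp (cox_step S m) (u' @ [s, s]) u'" by (rule r_into_equivclp)
  moreover have "u @ [s] = u' @ [s, s]" using us by simp
  ultimately have "equivclp (cox_step S m) (u @ [s]) u'" by (simp only:)
  moreover have "u @ [s] \<in> lists S" using uS sS by simp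
  ultimately have "(u @ [s], u') \<in> cox_rel S m"
    using u'S unfolding cox_rel_def by simp
  moreover have "u @ [s] \<in> (\<lambda>u. u @ [s]) ` w" using uw by simp
  ultimately have "u' \<in> cox_rmul S m w s" unfolding cox_rmul_def by (rule ImageI)
  hence "\<exists>v\<in>cox_rmul S m w s. length v = length u'" by (intro bexI) simp_all
  hence "cox_length (cox_rmul S m w s) \<le> length u'"
    unfolding cox_length_def by (rule Least_le)
  also have "\<dots> < cox_length w" using ul us by simp
  finally have "s \<in> descent_set S m w" using sS unfolding descent_set_def by simp
  thus ?thesis ..
qed




lemma cm_coord:
  assumes "continuous_map Y (subtopology (powertop_real UNIV) X) f"
  shows "continuous_map Y euclideanreal (\<lambda>y. f y k)"
  using assms by (simp add: continuous_map_in_subtopology continuous_map_componentwise_UNIV)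

lemma cm_fst01: "continuous_map (prod_topology (top_of_set {0..1::real}) Y) euclideanreal fst"
  by (metis continuous_map_fst continuous_map_from_subtopology continuous_map_id continuous_map_compose id_comp)

lemma cm_snd:
  assumes "continuous_map Y euclideanreal g"
  shows "continuous_map (prod_topology Z Y) euclideanreal (\<lambda>p. g (snd p))"
  using continuous_map_compose[OF continuous_map_snd assms] by (simp add: o_def)

lemma cm_into_sub:
  assumes "\<And>k. continuous_map Z euclideanreal (\<lambda>p. h p k)"
    and "\<And>p. p \<in> topspace Z \<Longrightarrow> h p \<in> X"
  shows "continuous_map Z (subtopology (powertop_real UNIV) X) h"
  using assms by (auto simp: continuous_map_in_subtopology continuous_map_componentwise_UNIV)

lemma star_hom:
  fixes X :: "(nat \<Rightarrow> real) set"
  assumes c: "c \<in> X" and star: "\<And>x t. x \<in> X \<Longrightarrow> 0 \<le> t \<Longrightarrow> t \<le> 1 \<Longrightarrow> (\<lambda>k. (1-t) * x k + t * c k) \<in> X"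
    and f: "continuous_map Y (subtopology (powertop_real UNIV) X) f"
  shows "homotopic_with (\<lambda>_. True) Y (subtopology (powertop_real UNIV) X) f (\<lambda>_. c)"
  unfolding homotopic_with_def
proof (intro exI conjI allI ballI)
  let ?h = "\<lambda>p::real \<times> _. (\<lambda>k. (1 - fst p) * f (snd p) k + fst p * c k)"
  show "continuous_map (prod_topology (top_of_set {0..1}) Y) (subtopology (powertop_real UNIV) X) ?h"
  proof (rule cm_into_sub)
    fix k
    show "continuous_map (prod_topology (top_of_set {0..1}) Y) euclideanreal (\<lambda>p. ?h p k)"
      by (intro continuous_intros cm_fst01 cm_snd cm_coord[OF f])
  next
    fix p assume "p \<in> topspace (prod_topology (top_of_set {0..1::real}) Y)"
    hence "fst p \<in> {0..1}" "snd p \<in> topspace Y" by auto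
    moreover have "f (snd p) \<in> X" using f \<open>snd p \<in> topspace Y\<close>
      by (auto simp: continuous_map_in_subtopology continuous_map_def)
    ultimately show "?h p \<in> X" using star by auto
  qed
qed auto




definition bdry :: "nat \<Rightarrow> (nat \<Rightarrow> real) set" where
  "bdry n = {x \<in> std_simplex n. \<exists>j\<le>n. x j = 0}"

lemma kconn_star:
  fixes X :: "(nat \<Rightarrow> real) set"
  assumes c: "c \<in> X" and star: "\<And>x t. x \<in> X \<Longrightarrow> 0 \<le> t \<Longrightarrow> t \<le> 1 \<Longrightarrow> (\<lambda>k. (1-t) * x k + t * c k) \<in> X"
  shows "k_connected k (subtopology (powertop_real UNIV) X)"
  unfolding k_connected_def
  using c star_hom[OF c star] by auto

lemma simplex_conv:
  assumes "x \<in> std_simplex n" "c \<in> std_simplex n" "0 \<le> t" "t \<le> 1"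
  shows "(\<lambda>k. (1-t) * x k + t * c k) \<in> std_simplex n"
proof -
  have x: "\<forall>i. 0 \<le> x i \<and> x i \<le> 1" "\<forall>i>n. x i = 0" "(\<Sum>i\<le>n. x i) = 1"
    and c: "\<forall>i. 0 \<le> c i \<and> c i \<le> 1" "\<forall>i>n. c i = 0" "(\<Sum>i\<le>n. c i) = 1"
    using assms(1,2) by (auto simp: std_simplex_def)
  have "(\<Sum>i\<le>n. (1-t) * x i + t * c i) = (1-t) * (\<Sum>i\<le>n. x i) + t * (\<Sum>i\<le>n. c i)"
    by (simp add: sum.distrib sum_distrib_left)
  also have "\<dots> = 1" using x c by simp
  finally have s: "(\<Sum>i\<le>n. (1-t) * x i + t * c i) = 1" .
  have "0 \<le> (1-t) * x i + t * c i \<and> (1-t) * x i + t * c i \<le> 1" for i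
  proof -
    have "(1-t) * x i \<le> (1-t) * 1" using x assms by (intro mult_left_mono) auto
    moreover have "t * c i \<le> t * 1" using c assms by (intro mult_left_mono) auto
    ultimately show ?thesis using x c assms by auto
  qed
  thus ?thesis using s x c unfolding std_simplex_def by auto
qed

lemma vertex_simplex:
  assumes "j \<le> n"
  shows "(\<lambda>k. if k = j then 1 else 0) \<in> std_simplex n"
  using assms by (auto simp: std_simplex_def)

lemma star_facets:
  assumes J: "J \<subseteq> {..n}" and j0: "j0 \<le> n" "j0 \<notin> J"
    and x: "x \<in> {x \<in> std_simplex n. \<exists>j\<in>J. x j = 0}" and t: "0 \<le> t" "t \<le> 1"
  shows "(\<lambda>k. (1-t) * x k + t * (\<lambda>k. if k = j0 then 1 else 0) k) \<in> {x \<in> std_simplex n. \<exists>j\<in>J. x j = 0}"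
proof -
  obtain j where "j \<in> J" "x j = 0" using x by auto
  moreover have "j \<noteq> j0" using j0 \<open>j \<in> J\<close> by auto
  ultimately show ?thesis
    using simplex_conv[OF _ vertex_simplex[OF j0(1)] t] x by auto
qed

lemma vtx_index_le:
  assumes "s \<in> Sn V n" "1 \<le> n"
  shows "vtx_index v1 s \<le> n"
  using assms by (auto simp: Sn_def vtx_index_def)




fun mn :: "nat \<Rightarrow> (nat \<Rightarrow> real) \<Rightarrow> real" where
  "mn 0 y = y 0"
| "mn (Suc n) y = min (mn n y) (y (Suc n))"

definition rho :: "nat \<Rightarrow> (nat \<Rightarrow> real) \<Rightarrow> nat \<Rightarrow> real" where
  "rho n y = (\<lambda>j. if j \<le> n then (y j - mn n y) / (\<Sum>k\<le>n. y k - mn n y) else 0)"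

lemma mn_le: "k \<le> n \<Longrightarrow> mn n y \<le> y k"
  by (induction n) (auto simp: le_Suc_eq min.coboundedI1)

lemma mn_ex: "\<exists>k\<le>n. mn n y = y k"
proof (induction n)
  case (Suc n)
  then obtain k where "k \<le> n" "mn n y = y k" by blast
  thus ?case by (cases "y k \<le> y (Suc n)") (auto simp: min_def intro: exI[of _ k] exI[of _ "Suc n"])
qed auto

lemma mn_eq:
  assumes "\<And>k. k \<le> n \<Longrightarrow> c \<le> y k" "k0 \<le> n" "y k0 = c"
  shows "mn n y = c"
  using mn_le[OF assms(2), of y] mn_ex[of n y] assms by force

lemma mn_lip:
  assumes "\<And>k. k \<le> n \<Longrightarrow> \<bar>y k - z k\<bar> \<le> \<tau>"
  shows "\<bar>mn n y - mn n z\<bar> \<le> \<tau>"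
  using assms
proof (induction n)
  case 0 then show ?case by simp
next
  case (Suc n)
  have a: "\<bar>mn n y - mn n z\<bar> \<le> \<tau>" using Suc by simp
  have b: "\<bar>y (Suc n) - z (Suc n)\<bar> \<le> \<tau>" using Suc by simp
  show ?case using a b by (simp add: min_def abs_le_iff)
qed

lemma cm_mn:
  assumes "\<And>k. continuous_map X euclideanreal (\<lambda>p. z p k)"
  shows "continuous_map X euclideanreal (\<lambda>p. mn n (z p))"
  by (induction n) (auto intro: continuous_map_real_min assms)

lemma den_nonneg: "0 \<le> (\<Sum>k\<le>n. y k - mn n y)"
  by (intro sum_nonneg) (simp add: mn_le)

lemma den_zero:
  assumes "(\<Sum>k\<le>n. y k - mn n y) = 0" "k \<le> n"
  shows "y k = mn n y"
proof -
  have "\<forall>k\<in>{..n}. y k - mn n y = 0"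
    using assms(1) by (subst sum_nonneg_eq_0_iff[symmetric]) (auto simp: mn_le)
  thus ?thesis using assms(2) by auto
qed

lemma rho_bdry:
  assumes pos: "0 < (\<Sum>k\<le>n. y k - mn n y)"
  shows "rho n y \<in> bdry n"
proof -
  let ?S = "\<Sum>k\<le>n. y k - mn n y"
  have ge: "0 \<le> rho n y j" for j using pos by (simp add: rho_def mn_le)
  have le: "rho n y j \<le> 1" for j
  proof (cases "j \<le> n")
    case True
    have "y j - mn n y \<le> ?S"
      using True by (intro member_le_sum) (auto simp: mn_le)
    thus ?thesis using True pos by (simp add: rho_def)
  qed (simp add: rho_def)
  have sum: "(\<Sum>j\<le>n. rho n y j) = 1"
    using pos by (simp add: rho_def sum_divide_distrib[symmetric])
  obtain k where "k \<le> n" "mn n y = y k" using mn_ex by blast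
  hence "rho n y k = 0" by (simp add: rho_def)
  thus ?thesis using ge le sum \<open>k \<le> n\<close> unfolding bdry_def std_simplex_def
    by (auto simp: rho_def)
qed

lemma bdry_mn: "x \<in> bdry n \<Longrightarrow> mn n x = 0"
  unfolding bdry_def std_simplex_def by (auto intro: mn_eq)

lemma rho_id:
  assumes "x \<in> bdry n"
  shows "rho n x = x"
proof
  fix j
  have "mn n x = 0" using assms by (rule bdry_mn)
  moreover have "(\<Sum>k\<le>n. x k) = 1" "\<forall>i>n. x i = 0" using assms by (auto simp: bdry_def std_simplex_def)
  ultimately show "rho n x j = x j" by (simp add: rho_def)
qed

lemma rho_affine:
  assumes q: "q \<in> bdry n" and l: "0 < lam" and y: "\<And>k. k \<le> n \<Longrightarrow> y k = c0 + lam * q k"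
  shows "rho n y = q"
proof
  fix j
  have q0: "\<forall>i. 0 \<le> q i" "\<forall>i>n. q i = 0" "(\<Sum>k\<le>n. q k) = 1" "\<exists>j\<le>n. q j = 0"
    using q by (auto simp: bdry_def std_simplex_def)
  then obtain k0 where k0: "k0 \<le> n" "q k0 = 0" by blast
  have "mn n y = c0"
  proof (rule mn_eq[of n c0 y k0])
    fix k assume "k \<le> n" thus "c0 \<le> y k" using y q0(1) l by simp
  qed (use k0 y in simp_all)
  moreover have "(\<Sum>k\<le>n. y k - c0) = (\<Sum>k\<le>n. lam * q k)" using y by (intro sum.cong) simp_all
  moreover have "(\<Sum>k\<le>n. lam * q k) = lam" using q0(3) by (simp add: sum_distrib_left[symmetric])
  ultimately have den: "(\<Sum>k\<le>n. y k - mn n y) = lam" by simp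
  show "rho n y j = q j"
  proof (cases "j \<le> n")
    case True
    thus ?thesis unfolding rho_def using den \<open>mn n y = c0\<close> y[OF True] l by simp
  next
    case False thus ?thesis unfolding rho_def using q0(2) by simp
  qed
qed

lemma cm_rho:
  assumes "\<And>k. continuous_map X euclideanreal (\<lambda>p. z p k)"
    and "\<And>p. p \<in> topspace X \<Longrightarrow> 0 < (\<Sum>k\<le>n. z p k - mn n (z p))"
  shows "continuous_map X (subtopology (powertop_real UNIV) (bdry n)) (\<lambda>p. rho n (z p))"
proof (rule cm_into_sub)
  fix j
  show "continuous_map X euclideanreal (\<lambda>p. rho n (z p) j)"
  proof (cases "j \<le> n")
    case True
    have "continuous_map X euclideanreal (\<lambda>p. (z p j - mn n (z p)) / (\<Sum>k\<le>n. z p k - mn n (z p)))"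
      using assms(2) by (intro continuous_map_real_divide continuous_map_diff continuous_map_sum assms(1) cm_mn) force+
    thus ?thesis using True by (simp add: rho_def)
  qed (simp add: rho_def)
next
  fix p assume "p \<in> topspace X"
  thus "rho n (z p) \<in> bdry n" using assms(2) rho_bdry by blast
qed

lemma rho_lip:
  assumes yz: "\<And>k. k \<le> n \<Longrightarrow> \<bar>y k - z k\<bar> \<le> \<tau>"
    and Sy: "\<kappa> \<le> (\<Sum>k\<le>n. y k - mn n y)" and Sz: "\<kappa> \<le> (\<Sum>k\<le>n. z k - mn n z)" and kp: "0 < \<kappa>"
  shows "\<bar>rho n y j - rho n z j\<bar> \<le> (2 * real n + 4) * \<tau> / \<kappa>"
proof (cases "j \<le> n")
  case False
  have "0 \<le> \<tau>" using yz[of 0] by linarith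
  thus ?thesis using False kp by (simp add: rho_def)
next
  case True
  define A where "A = (\<Sum>k\<le>n. y k - mn n y)"
  define B where "B = (\<Sum>k\<le>n. z k - mn n z)"
  define a where "a = y j - mn n y"
  define b where "b = z j - mn n z"
  have t0: "0 \<le> \<tau>" using yz[of 0] by linarith
  have mm: "\<bar>mn n y - mn n z\<bar> \<le> \<tau>" using yz by (rule mn_lip)
  have ab: "\<bar>a - b\<bar> \<le> 2 * \<tau>" using yz[OF True] mm unfolding a_def b_def by linarith
  have "\<bar>A - B\<bar> = \<bar>\<Sum>k\<le>n. (y k - mn n y) - (z k - mn n z)\<bar>"
    unfolding A_def B_def by (simp only: sum_subtractf)
  also have "\<dots> = \<bar>\<Sum>k\<le>n. (y k - z k) - (mn n y - mn n z)\<bar>"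
    by (rule arg_cong[where f=abs], rule sum.cong) auto
  also have "\<dots> \<le> (\<Sum>k\<le>n. \<bar>(y k - z k) - (mn n y - mn n z)\<bar>)" by (rule sum_abs)
  also have "\<dots> \<le> (\<Sum>k\<le>n. 2 * \<tau>)"
    by (intro sum_mono) (use yz mm in fastforce)
  finally have AB: "\<bar>A - B\<bar> \<le> 2 * (real n + 1) * \<tau>" by (simp add: algebra_simps)
  have b0: "0 \<le> b" unfolding b_def by (simp add: mn_le True)
  have bB: "b \<le> B" unfolding b_def B_def using True by (intro member_le_sum) (auto simp: mn_le)
  have Ap: "\<kappa> \<le> A" "\<kappa> \<le> B" using Sy Sz A_def B_def by auto
  have Apos: "0 < A" using Ap kp by linarith
  have Bpos: "0 < B" using Ap kp by linarith
  have eq: "a / A - b / B = (a - b) / A + (b / B) * (B - A) / A"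
    using Apos Bpos by (simp add: field_simps)
  have bB1: "b / B \<le> 1" using bB Bpos by simp
  have bB0: "0 \<le> b / B" using b0 Bpos by simp
  have t1: "\<bar>(a - b) / A\<bar> \<le> 2 * \<tau> / \<kappa>"
  proof -
    have "\<bar>(a - b) / A\<bar> = \<bar>a - b\<bar> / A" using Apos by simp
    also have "\<dots> \<le> 2 * \<tau> / A" using ab Apos by (intro divide_right_mono) auto
    also have "\<dots> \<le> 2 * \<tau> / \<kappa>" using t0 Ap kp by (intro divide_left_mono) auto
    finally show ?thesis .
  qed
  have t2: "\<bar>(b / B) * (B - A) / A\<bar> \<le> 2 * (real n + 1) * \<tau> / \<kappa>"
  proof -
    have "\<bar>(b / B) * (B - A) / A\<bar> = (b / B) * \<bar>B - A\<bar> / A" using Apos Bpos b0 by (simp add: abs_mult)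
    also have "\<dots> \<le> 1 * \<bar>B - A\<bar> / A" using bB1 Apos by (intro divide_right_mono mult_right_mono) auto
    also have "\<dots> \<le> 2 * (real n + 1) * \<tau> / A" using AB Apos by (intro divide_right_mono) auto
    also have "\<dots> \<le> 2 * (real n + 1) * \<tau> / \<kappa>" using t0 Ap kp by (intro divide_left_mono) auto
    finally show ?thesis .
  qed
  have "\<bar>a / A - b / B\<bar> \<le> 2 * \<tau> / \<kappa> + 2 * (real n + 1) * \<tau> / \<kappa>"
  proof -
    have "\<bar>a / A - b / B\<bar> \<le> \<bar>(a - b) / A\<bar> + \<bar>(b / B) * (B - A) / A\<bar>"
      unfolding eq by (rule abs_triangle_ineq)
    thus ?thesis using t1 t2 by linarith
  qed
  also have "\<dots> = (2 * real n + 4) * \<tau> / \<kappa>" using kp by (simp add: field_simps)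
  finally have fin: "\<bar>a / A - b / B\<bar> \<le> (2 * real n + 4) * \<tau> / \<kappa>" .
  have "rho n y j = a / A" "rho n z j = b / B" using True by (simp_all add: rho_def a_def A_def b_def B_def)
  thus ?thesis using fin by simp
qed




definition Sph :: "nat \<Rightarrow> (nat \<Rightarrow> real) set" where
  "Sph i = {x. (\<Sum>k\<le>i. x k ^ 2) = 1 \<and> (\<forall>k>i. x k = 0)}"

lemma nsphere_eq: "nsphere i = top_of_set (Sph i)"
  by (simp add: nsphere Sph_def euclidean_product_topology)

definition dd :: "nat \<Rightarrow> (nat \<Rightarrow> real) \<Rightarrow> (nat \<Rightarrow> real) \<Rightarrow> real" where
  "dd i x y = (\<Sum>k\<le>i. \<bar>x k - y k\<bar>)"

lemma dd_nonneg: "0 \<le> dd i x y" by (simp add: dd_def sum_nonneg)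
lemma dd_self: "dd i x x = 0" by (simp add: dd_def)
lemma dd_sym: "dd i x y = dd i y x" by (simp add: dd_def abs_minus_commute)
lemma dd_tri: "dd i x z \<le> dd i x y + dd i y z"
  unfolding dd_def sum.distrib[symmetric]
proof (intro sum_mono)
  fix k show "\<bar>x k - z k\<bar> \<le> \<bar>x k - y k\<bar> + \<bar>y k - z k\<bar>"
    using abs_diff_triangle_ineq[of "x k" "y k" "y k" "z k"] by simp
qed

lemma dd_coord:
  assumes "x \<in> Sph i" "y \<in> Sph i"
  shows "\<bar>x k - y k\<bar> \<le> dd i x y"
proof (cases "k \<le> i")
  case True
  thus ?thesis unfolding dd_def by (intro member_le_sum) auto
next
  case False thus ?thesis using assms by (simp add: Sph_def dd_nonneg)
qed

lemma Sph_coord_le1: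
  assumes "x \<in> Sph i"
  shows "\<bar>x k\<bar> \<le> 1"
proof (cases "k \<le> i")
  case True
  have "x k ^ 2 \<le> (\<Sum>j\<le>i. x j ^ 2)" using True by (intro member_le_sum) auto
  hence "x k ^ 2 \<le> 1" using assms by (simp add: Sph_def)
  thus ?thesis by (simp add: abs_square_le_1)
next
  case False thus ?thesis using assms by (simp add: Sph_def)
qed

lemma compact_Sph: "compact (Sph i)"
proof -
  define K where "K = PiE UNIV (\<lambda>k. if k \<le> i then {-1..1::real} else {0})"
  have "compactin (product_topology (\<lambda>_. euclideanreal) UNIV) K"
    unfolding K_def by (subst compactin_PiE) auto
  hence cK: "compact K" using euclidean_product_topology by (metis compactin_euclidean_iff)
  have cl: "closed {x::nat\<Rightarrow>real. (\<Sum>k\<le>i. x k ^ 2) = 1}"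
    by (intro closed_Collect_eq continuous_intros continuous_on_product_coordinates)
  have "Sph i = K \<inter> {x. (\<Sum>k\<le>i. x k ^ 2) = 1}"
  proof (intro equalityI subsetI)
    fix x assume x: "x \<in> Sph i"
    have "x k \<in> (if k \<le> i then {-1..1} else {0})" for k
      using Sph_coord_le1[OF x, of k] x by (auto simp: Sph_def abs_le_iff)
    thus "x \<in> K \<inter> {x. (\<Sum>k\<le>i. x k ^ 2) = 1}" using x unfolding K_def Sph_def by auto
  next
    fix x assume x: "x \<in> K \<inter> {x. (\<Sum>k\<le>i. x k ^ 2) = 1}"
    have "x k = 0" if "i < k" for k
    proof -
      have "x k \<in> (if k \<le> i then {-1..1} else {0})" using x unfolding K_def by blast
      thus ?thesis using that by simp
    qed
    thus "x \<in> Sph i" using x unfolding Sph_def by blast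
  qed
  thus ?thesis using cK cl by auto
qed

lemma Sph_ne: "(\<lambda>k. if k = 0 then 1 else 0) \<in> Sph i"
  by (simp add: Sph_def power2_eq_square if_distrib[where f = "\<lambda>x. x * _"] cong: if_cong)

lemma dist_le_dd:
  assumes "x \<in> Sph i" "y \<in> Sph i"
  shows "dist x y \<le> 2 * dd i x y + (1/2)^N"
proof -
  have "dist x y \<le> 2 * Max {dist (x (from_nat n)) (y (from_nat n)) |n. n \<le> N} + (1/2)^N"
    by (rule dist_fun_le_dist_first_terms)
  moreover have "Max {dist (x (from_nat n)) (y (from_nat n)) |n. n \<le> N} \<le> dd i x y"
  proof (rule Max.boundedI)
    have "{dist (x (from_nat n)) (y (from_nat n)) |n. n \<le> N} = (\<lambda>n. dist (x (from_nat n)) (y (from_nat n))) ` {..N}"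
      by auto
    thus "finite {dist (x (from_nat n)) (y (from_nat n)) |n. n \<le> N}" by simp
    show "{dist (x (from_nat n)) (y (from_nat n)) |n. n \<le> N} \<noteq> {}" by auto
  next
    fix a assume "a \<in> {dist (x (from_nat n)) (y (from_nat n)) |n. n \<le> N}"
    then obtain n where "a = dist (x (from_nat n)) (y (from_nat n))" by auto
    thus "a \<le> dd i x y" using dd_coord[OF assms] by (simp add: dist_real_def)
  qed
  ultimately show ?thesis by linarith
qed

lemma unif_Sph:
  fixes h :: "(nat \<Rightarrow> real) \<Rightarrow> real"
  assumes "continuous_on (Sph i) h" "0 < e"
  shows "\<exists>\<delta>>0. \<forall>x\<in>Sph i. \<forall>y\<in>Sph i. dd i x y < \<delta> \<longrightarrow> \<bar>h x - h y\<bar> < e"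
proof -
  have "uniformly_continuous_on (Sph i) h"
    using compact_uniformly_continuous[OF assms(1) compact_Sph] .
  then obtain d where d: "0 < d" "\<And>x y. x \<in> Sph i \<Longrightarrow> y \<in> Sph i \<Longrightarrow> dist y x < d \<Longrightarrow> dist (h y) (h x) < e"
    using assms(2) unfolding uniformly_continuous_on_def by metis
  obtain N where N: "(1/2::real)^N < d/2" using real_arch_pow_inv[of "d/2" "1/2"] d by auto
  show ?thesis
  proof (intro exI[of _ "d/4"] conjI ballI impI)
    fix x y assume xy: "x \<in> Sph i" "y \<in> Sph i" "dd i x y < d/4"
    have "dist y x \<le> 2 * dd i y x + (1/2)^N" using dist_le_dd[OF xy(2,1)] .
    also have "\<dots> < d" using xy(3) N dd_sym[of i x y] by linarith
    finally have "dist (h y) (h x) < e" using d xy by blast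
    thus "\<bar>h x - h y\<bar> < e" by (simp add: dist_real_def abs_minus_commute)
  qed (use d in auto)
qed

lemma lip_cont:
  fixes g :: "(nat \<Rightarrow> real) \<Rightarrow> real"
  assumes lip: "\<And>x y. x \<in> S \<Longrightarrow> y \<in> S \<Longrightarrow> \<bar>g x - g y\<bar> \<le> L * dd i x y" and L: "0 \<le> L"
  shows "continuous_on S g"
  unfolding continuous_on_topological
proof (intro ballI allI impI)
  fix x B assume x: "x \<in> S" and B: "open B" "g x \<in> B"
  obtain e where e: "0 < e" "ball (g x) e \<subseteq> B" using B openE by blast
  define A where "A = {y. L * dd i x y < e}"
  have "open A" unfolding A_def dd_def
    by (intro open_Collect_less continuous_intros continuous_on_product_coordinates)
  moreover have "x \<in> A" using e by (simp add: A_def dd_self)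
  moreover have "g y \<in> B" if "y \<in> S" "y \<in> A" for y
  proof -
    have "\<bar>g x - g y\<bar> < e" using lip[OF x that(1)] that(2) unfolding A_def by simp
    thus ?thesis using e by (auto simp: dist_real_def)
  qed
  ultimately show "\<exists>A. open A \<and> x \<in> A \<and> (\<forall>y\<in>S. y \<in> A \<longrightarrow> g y \<in> B)" by blast
qed

definition mcs :: "nat \<Rightarrow> real \<Rightarrow> ((nat \<Rightarrow> real) \<Rightarrow> real) \<Rightarrow> (nat \<Rightarrow> real) \<Rightarrow> real" where
  "mcs i L F x = Inf ((\<lambda>y. F y + L * dd i x y) ` Sph i)"

lemma mcs_props:
  assumes F01: "\<And>y. y \<in> Sph i \<Longrightarrow> 0 \<le> F y \<and> F y \<le> 1"
    and del: "0 < \<delta>" "\<And>x y. x \<in> Sph i \<Longrightarrow> y \<in> Sph i \<Longrightarrow> dd i x y < \<delta> \<Longrightarrow> \<bar>F x - F y\<bar> < e"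
    and e: "0 < e"
    and x: "x \<in> Sph i"
  shows "\<bar>mcs i (1/\<delta>) F x - F x\<bar> \<le> e"
    and "\<And>x'. x' \<in> Sph i \<Longrightarrow> \<bar>mcs i (1/\<delta>) F x - mcs i (1/\<delta>) F x'\<bar> \<le> (1/\<delta>) * dd i x x'"
proof -
  let ?L = "1/\<delta>"
  have L0: "0 \<le> ?L" using del by simp
  have bdd: "bdd_below ((\<lambda>y. F y + ?L * dd i z y) ` Sph i)" for z
    by (rule bdd_belowI[of _ 0]) (use F01 L0 dd_nonneg in auto)
  have ne: "(\<lambda>y. F y + ?L * dd i z y) ` Sph i \<noteq> {}" for z using Sph_ne by blast
  have low: "mcs i ?L F z \<le> F y + ?L * dd i z y" if "y \<in> Sph i" for z y
    unfolding mcs_def by (rule cInf_lower) (use that bdd in auto)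
  have up: "F x - e \<le> mcs i ?L F x"
    unfolding mcs_def
  proof (rule cInf_greatest[OF ne])
    fix a assume "a \<in> (\<lambda>y. F y + ?L * dd i x y) ` Sph i"
    then obtain y where y: "y \<in> Sph i" "a = F y + ?L * dd i x y" by blast
    show "F x - e \<le> a"
    proof (cases "dd i x y < \<delta>")
      case True
      thus ?thesis using del(2)[OF x y(1)] y L0 dd_nonneg[of i x y] mult_nonneg_nonneg[OF L0 dd_nonneg[of i x y]] by linarith
    next
      case False
      hence "1 \<le> ?L * dd i x y" using del(1) by (simp add: field_simps)
      thus ?thesis using F01[OF x] F01[OF y(1)] y e by linarith
    qed
  qed
  have "mcs i ?L F x \<le> F x" using low[OF x, of x] by (simp add: dd_self)
  thus "\<bar>mcs i ?L F x - F x\<bar> \<le> e" using up by linarith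
  have half: "mcs i ?L F z - ?L * dd i z z' \<le> mcs i ?L F z'" if "z \<in> Sph i" "z' \<in> Sph i" for z z'
    unfolding mcs_def[of i ?L F z']
  proof (rule cInf_greatest[OF ne])
    fix a assume "a \<in> (\<lambda>y. F y + ?L * dd i z' y) ` Sph i"
    then obtain y where y: "y \<in> Sph i" "a = F y + ?L * dd i z' y" by blast
    have "mcs i ?L F z \<le> F y + ?L * dd i z y" by (rule low[OF y(1)])
    moreover have "?L * dd i z y \<le> ?L * dd i z z' + ?L * dd i z' y"
      using dd_tri[of i z y z'] L0 by (simp add: add_divide_distrib[symmetric] divide_right_mono)
    ultimately show "mcs i ?L F z - ?L * dd i z z' \<le> a" using y by linarith
  qed
  fix x' assume x': "x' \<in> Sph i"
  show "\<bar>mcs i ?L F x - mcs i ?L F x'\<bar> \<le> ?L * dd i x x'"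
    using half[OF x x'] half[OF x' x, unfolded dd_sym[of i x' x]] unfolding abs_le_iff by linarith
qed




lemma amax_ex: fixes i :: nat and x :: "nat \<Rightarrow> real" shows "\<exists>k. k \<le> i \<and> (\<forall>j\<le>i. \<bar>x j\<bar> \<le> \<bar>(x k)::real\<bar>)"
proof (induction i)
  case 0 thus ?case by auto
next
  case (Suc i)
  then obtain k where k: "k \<le> i" "\<forall>j\<le>i. \<bar>x j\<bar> \<le> \<bar>x k\<bar>" by blast
  show ?case
  proof (cases "\<bar>x (Suc i)\<bar> \<le> \<bar>x k\<bar>")
    case True
    thus ?thesis using k by (intro exI[of _ k]) (auto simp: le_Suc_eq)
  next
    case False
    thus ?thesis using k by (intro exI[of _ "Suc i"]) (auto simp: le_Suc_eq)
  qed
qed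

definition amax :: "nat \<Rightarrow> (nat \<Rightarrow> real) \<Rightarrow> nat" where
  "amax i x = (SOME k. k \<le> i \<and> (\<forall>j\<le>i. \<bar>x j\<bar> \<le> \<bar>x k\<bar>))"

lemma amax: "amax i x \<le> i" "\<And>j. j \<le> i \<Longrightarrow> \<bar>x j\<bar> \<le> \<bar>x (amax i x)\<bar>"
  using someI_ex[OF amax_ex[of i x]] unfolding amax_def by blast+

definition skip :: "nat \<Rightarrow> nat \<Rightarrow> nat" where "skip k j = (if j < k then j else Suc j)"

definition cell :: "nat \<Rightarrow> nat \<Rightarrow> (nat \<Rightarrow> real) \<Rightarrow> nat \<times> bool \<times> int list" where
  "cell N i x = (amax i x, 0 < x (amax i x), map (\<lambda>j. \<lfloor>real N * x (skip (amax i x) j)\<rfloor>) [0..<i])"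

definition Cset :: "nat \<Rightarrow> nat \<Rightarrow> (nat \<times> bool \<times> int list) set" where
  "Cset N i = {..i} \<times> UNIV \<times> {xs. set xs \<subseteq> {-int N..int N} \<and> length xs = i}"

lemma finite_Cset: "finite (Cset N i)"
  unfolding Cset_def by (intro finite_cartesian_product finite_lists_length_eq) auto

lemma card_Cset: "card (Cset N i) = (i + 1) * 2 * (2 * N + 1) ^ i"
proof -
  have "card {xs. set xs \<subseteq> {-int N..int N} \<and> length xs = i} = (2 * N + 1) ^ i"
    by (subst card_lists_length_eq) (auto simp: nat_add_distrib nat_mult_distrib)
  thus ?thesis unfolding Cset_def by (simp add: card_cartesian_product)
qed

lemma floor_range:
  assumes "\<bar>r\<bar> \<le> 1"
  shows "\<lfloor>real N * r\<rfloor> \<in> {-int N..int N}"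
proof -
  have "- real N \<le> real N * r" "real N * r \<le> real N"
    using assms mult_left_mono[of r 1 "real N"] mult_left_mono[of "-1" r "real N"] by (auto simp: abs_le_iff)
  thus ?thesis by (simp add: le_floor_iff floor_le_iff)
qed

lemma cell_in: "x \<in> Sph i \<Longrightarrow> cell N i x \<in> Cset N i"
  unfolding cell_def Cset_def using amax(1) floor_range[OF Sph_coord_le1] by auto

lemma big_k:
  assumes x: "x \<in> Sph i"
  shows "1 / real (i+1) \<le> \<bar>x (amax i x)\<bar>"
proof -
  let ?k = "amax i x"
  have "1 = (\<Sum>j\<le>i. x j ^ 2)" using x by (simp add: Sph_def)
  also have "\<dots> \<le> (\<Sum>j\<le>i. x ?k ^ 2)"
  proof (intro sum_mono)
    fix j assume "j \<in> {..i}"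
    hence "\<bar>x j\<bar> \<le> \<bar>x ?k\<bar>" by (simp add: amax(2))
    thus "x j ^ 2 \<le> x ?k ^ 2" by (simp add: abs_le_square_iff)
  qed
  also have "\<dots> = real (i+1) * x ?k ^ 2" by simp
  finally have a: "1 / real (i+1) \<le> x ?k ^ 2" by (simp add: field_simps)
  have "x ?k ^ 2 \<le> \<bar>x ?k\<bar>"
  proof -
    have "\<bar>x ?k\<bar> * \<bar>x ?k\<bar> \<le> \<bar>x ?k\<bar> * 1"
      using Sph_coord_le1[OF x, of ?k] by (intro mult_left_mono) auto
    thus ?thesis by (simp add: power2_eq_square)
  qed
  thus ?thesis using a by linarith
qed

lemma floor_eq_close:
  assumes "\<lfloor>real N * a\<rfloor> = \<lfloor>real N * b\<rfloor>" "0 < N"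
  shows "\<bar>a - b\<bar> \<le> 1 / real N"
proof -
  have "\<bar>real N * a - real N * b\<bar> < 1"
    using assms(1) floor_correct[of "real N * a"] floor_correct[of "real N * b"] unfolding abs_less_iff
    by linarith
  moreover have "real N * \<bar>a - b\<bar> = \<bar>real N * a - real N * b\<bar>" by (simp add: abs_mult flip: right_diff_distrib)
  ultimately have "real N * \<bar>a - b\<bar> \<le> 1" by linarith
  thus ?thesis using assms(2) by (simp add: field_simps)
qed




lemma cell_diam:
  assumes x: "x \<in> Sph i" and y: "y \<in> Sph i" and N: "0 < N" and eq: "cell N i x = cell N i y"
  shows "dd i x y \<le> real ((i+1)^2) / real N"
proof -
  define k where "k = amax i x"
  have ky: "amax i y = k" using eq by (simp add: cell_def k_def)
  have sgn: "0 < x k \<longleftrightarrow> 0 < y k" using eq ky by (simp add: cell_def k_def)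
  have "map (\<lambda>j. \<lfloor>real N * x (skip k j)\<rfloor>) [0..<i] = map (\<lambda>j. \<lfloor>real N * y (skip k j)\<rfloor>) [0..<i]"
    using eq ky by (simp add: cell_def k_def)
  hence fl: "\<And>j. j < i \<Longrightarrow> \<lfloor>real N * x (skip k j)\<rfloor> = \<lfloor>real N * y (skip k j)\<rfloor>"
    by (simp add: map_eq_conv)
  have kle: "k \<le> i" using amax(1) k_def by simp
  have close: "\<bar>x j - y j\<bar> \<le> 1 / real N" if "j \<le> i" "j \<noteq> k" for j
  proof -
    define j' where "j' = (if j < k then j else j - 1)"
    have "j' < i" "skip k j' = j" using that kle unfolding j'_def skip_def by auto
    thus ?thesis using fl[OF \<open>j' < i\<close>] floor_eq_close N by metis
  qed
  define R where "R = {..i} - {k}"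
  have cR: "card R = i" "finite R" using kle unfolding R_def by auto
  have kin: "k \<in> {..i}" using kle by simp
  have sx: "x k ^ 2 + (\<Sum>j\<in>R. x j ^ 2) = 1"
    using x sum.remove[OF finite_atMost kin, of "\<lambda>j. x j ^ 2"] unfolding R_def Sph_def by simp
  have sy: "y k ^ 2 + (\<Sum>j\<in>R. y j ^ 2) = 1"
    using y sum.remove[OF finite_atMost kin, of "\<lambda>j. y j ^ 2"] unfolding R_def Sph_def by simp
  have sq: "\<bar>x k ^ 2 - y k ^ 2\<bar> \<le> 2 * real i / real N"
  proof -
    have "x k ^ 2 - y k ^ 2 = (\<Sum>j\<in>R. (y j - x j) * (y j + x j))"
    proof -
      have "(\<Sum>j\<in>R. (y j - x j) * (y j + x j)) = (\<Sum>j\<in>R. y j ^ 2 - x j ^ 2)"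
        by (rule sum.cong) (simp_all add: power2_eq_square algebra_simps)
      also have "\<dots> = (\<Sum>j\<in>R. y j ^ 2) - (\<Sum>j\<in>R. x j ^ 2)" by (rule sum_subtractf)
      finally show ?thesis using sx sy by linarith
    qed
    hence "\<bar>x k ^ 2 - y k ^ 2\<bar> \<le> (\<Sum>j\<in>R. \<bar>(y j - x j) * (y j + x j)\<bar>)"
      by (simp add: sum_abs)
    also have "\<dots> \<le> (\<Sum>j\<in>R. (1 / real N) * 2)"
    proof (intro sum_mono)
      fix j assume "j \<in> R"
      hence "j \<le> i" "j \<noteq> k" unfolding R_def by auto
      have a: "\<bar>y j - x j\<bar> \<le> 1 / real N" using close[OF \<open>j \<le> i\<close> \<open>j \<noteq> k\<close>] by (simp add: abs_minus_commute)
      have b: "\<bar>y j + x j\<bar> \<le> 2" using Sph_coord_le1[OF x, of j] Sph_coord_le1[OF y, of j] by linarith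
      show "\<bar>(y j - x j) * (y j + x j)\<bar> \<le> 1 / real N * 2"
        unfolding abs_mult using a b by (intro mult_mono) auto
    qed
    also have "\<dots> = 2 * real i / real N" using cR by simp
    finally show ?thesis .
  qed
  have bx: "1 / real (i+1) \<le> \<bar>x k\<bar>" using big_k[OF x] k_def by simp
  have by': "1 / real (i+1) \<le> \<bar>y k\<bar>" using big_k[OF y] ky by simp
  have pos: "0 < 1 / real (i+1)" by simp
  have sum_abs: "\<bar>x k + y k\<bar> = \<bar>x k\<bar> + \<bar>y k\<bar>"
  proof (cases "0 < x k")
    case True thus ?thesis using sgn by simp
  next
    case False
    have "0 < \<bar>x k\<bar>" using bx pos by linarith
    hence xk: "x k < 0" using False by linarith
    have "0 < \<bar>y k\<bar>" using by' pos by linarith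
    hence "y k < 0" using False sgn by linarith
    thus ?thesis using xk by simp
  qed
  have "\<bar>x k - y k\<bar> * \<bar>x k + y k\<bar> = \<bar>x k ^ 2 - y k ^ 2\<bar>"
    by (simp add: abs_mult[symmetric] power2_eq_square algebra_simps)
  hence "\<bar>x k - y k\<bar> * (2 / real (i+1)) \<le> 2 * real i / real N"
  proof -
    assume h: "\<bar>x k - y k\<bar> * \<bar>x k + y k\<bar> = \<bar>x k ^ 2 - y k ^ 2\<bar>"
    have "\<bar>x k - y k\<bar> * (2 / real (i+1)) \<le> \<bar>x k - y k\<bar> * \<bar>x k + y k\<bar>"
      using sum_abs bx by' by (intro mult_left_mono) auto
    thus ?thesis using h sq by linarith
  qed
  hence dk: "\<bar>x k - y k\<bar> \<le> real i * real (i+1) / real N"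
    using N by (simp add: field_simps)
  have "dd i x y = \<bar>x k - y k\<bar> + (\<Sum>j\<in>R. \<bar>x j - y j\<bar>)"
    unfolding dd_def R_def using sum.remove[OF finite_atMost kin, of "\<lambda>j. \<bar>x j - y j\<bar>"] by simp
  also have "\<dots> \<le> real i * real (i+1) / real N + (\<Sum>j\<in>R. 1 / real N)"
    using dk close unfolding R_def by (intro add_mono sum_mono) auto
  also have "\<dots> = (real i * real (i+1) + real i) / real N" using cR by (simp add: add_divide_distrib)
  also have "\<dots> \<le> real ((i+1)^2) / real N"
    by (intro divide_right_mono) (auto simp: power2_eq_square algebra_simps)
  finally show ?thesis .
qed




definition gu :: "nat \<Rightarrow> nat \<Rightarrow> nat list \<Rightarrow> nat \<Rightarrow> real" where
  "gu n N as l = (1 + real (as ! l) / real N) / (2 * real n)"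

definition gq :: "nat \<Rightarrow> nat \<Rightarrow> nat list \<Rightarrow> nat \<Rightarrow> real" where
  "gq n N as = (\<lambda>j. if 1 \<le> j \<and> j < n then gu n N as (j - 1)
                   else if j = n then 1 - (\<Sum>l<n-1. gu n N as l) else 0)"

definition Gset :: "nat \<Rightarrow> nat \<Rightarrow> nat list set" where
  "Gset n N = {as. set as \<subseteq> {0..N} \<and> length as = n - 1}"

lemma card_Gset: "card (Gset n N) = (N + 1) ^ (n - 1)"
  unfolding Gset_def by (subst card_lists_length_eq) auto

lemma finite_Gset: "finite (Gset n N)"
  unfolding Gset_def by (intro finite_lists_length_eq) auto

lemma gu_bounds:
  assumes "as \<in> Gset n N" "l < n - 1" "0 < N" "2 \<le> n"
  shows "0 \<le> gu n N as l" "gu n N as l \<le> 1 / real n"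
proof -
  have "as ! l \<in> set as" using assms(1,2) by (simp add: Gset_def)
  hence "as ! l \<le> N" using assms(1) by (auto simp: Gset_def)
  hence "real (as ! l) / real N \<le> 1" using assms(3) by simp
  hence "1 + real (as ! l) / real N \<le> 2" by simp
  hence "(1 + real (as ! l) / real N) / (2 * real n) \<le> 2 / (2 * real n)"
    using assms(4) by (intro divide_right_mono) auto
  thus "gu n N as l \<le> 1 / real n" unfolding gu_def by simp
  show "0 \<le> gu n N as l" unfolding gu_def by simp
qed

lemma gq_bdry:
  assumes as: "as \<in> Gset n N" and N: "0 < N" and n: "2 \<le> n"
  shows "gq n N as \<in> bdry n"
proof -
  define U where "U = (\<Sum>l<n-1. gu n N as l)"
  have U0: "0 \<le> U" unfolding U_def using gu_bounds[OF as _ N n] by (intro sum_nonneg) auto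
  have "U \<le> (\<Sum>l<n-1. 1 / real n)" unfolding U_def using gu_bounds[OF as _ N n] by (intro sum_mono) auto
  also have "\<dots> = real (n - 1) / real n" by simp
  also have "\<dots> \<le> 1" using n by simp
  finally have U1: "U \<le> 1" .
  have c01: "0 \<le> gq n N as j \<and> gq n N as j \<le> 1" for j
  proof -
    have "1 / real n \<le> 1" using n by simp
    hence "j - 1 < n - 1 \<Longrightarrow> gu n N as (j - 1) \<le> 1" using gu_bounds[OF as _ N n, of "j - 1"] by linarith
    thus ?thesis using gu_bounds[OF as _ N n, of "j - 1"] U0 U1 unfolding gq_def U_def[symmetric]
      by auto
  qed
  have z: "\<forall>j>n. gq n N as j = 0" by (simp add: gq_def)
  obtain m where m: "n = Suc m" using n by (cases n) auto
  have "(\<Sum>j\<le>n. gq n N as j) = (\<Sum>j<n. gq n N as j) + gq n N as n"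
    by (simp add: lessThan_Suc_atMost[symmetric])
  also have "(\<Sum>j<n. gq n N as j) = gq n N as 0 + (\<Sum>l<m. gq n N as (Suc l))"
    unfolding m by (rule sum.lessThan_Suc_shift)
  also have "(\<Sum>l<m. gq n N as (Suc l)) = U"
    unfolding U_def m by (intro sum.cong) (auto simp: gq_def)
  finally have "(\<Sum>j\<le>n. gq n N as j) = 1" using n by (simp add: gq_def U_def)
  moreover have "gq n N as 0 = 0" using n by (simp add: gq_def)
  ultimately show ?thesis using c01 z unfolding bdry_def std_simplex_def by auto
qed

lemma gq_close:
  assumes "l < n - 1" "0 < N" "2 \<le> n"
  shows "\<bar>real (as ! l) - real (bs ! l)\<bar> = 2 * real n * real N * \<bar>gq n N as (Suc l) - gq n N bs (Suc l)\<bar>"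
proof -
  have "gq n N as (Suc l) - gq n N bs (Suc l) = (real (as ! l) - real (bs ! l)) / (2 * real n * real N)"
  proof -
    have "Suc l < n" using assms by linarith
    hence "gq n N as (Suc l) = gu n N as l" "gq n N bs (Suc l) = gu n N bs l" by (simp_all add: gq_def)
    thus ?thesis using assms by (simp add: gu_def field_simps)
  qed
  thus ?thesis using assms by (simp add: abs_divide)
qed

lemma nbhd_card:
  assumes as0: "as0 \<in> Gset n N"
  shows "card {bs \<in> Gset n N. \<forall>l<n-1. \<bar>real (bs ! l) - real (as0 ! l)\<bar> \<le> real R} \<le> (2 * R + 1) ^ (n - 1)"
proof -
  let ?T = "{bs \<in> Gset n N. \<forall>l<n-1. \<bar>real (bs ! l) - real (as0 ! l)\<bar> \<le> real R}"
  define phi where "phi bs = map (\<lambda>l. bs ! l + R - as0 ! l) [0..<n-1]" for bs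
  have inj: "inj_on phi ?T"
  proof (rule inj_onI)
    fix bs bs' assume b: "bs \<in> ?T" "bs' \<in> ?T" and e: "phi bs = phi bs'"
    show "bs = bs'"
    proof (rule nth_equalityI)
      show "length bs = length bs'" using b by (simp add: Gset_def)
      fix l assume "l < length bs"
      hence l: "l < n - 1" using b by (simp add: Gset_def)
      have "bs ! l + R - as0 ! l = bs' ! l + R - as0 ! l"
        using e l unfolding phi_def by (simp add: map_eq_conv)
      moreover have "as0 ! l \<le> bs ! l + R" "as0 ! l \<le> bs' ! l + R"
        using b l by (auto simp: abs_le_iff)
      ultimately show "bs ! l = bs' ! l" by linarith
    qed
  qed
  have sub: "phi ` ?T \<subseteq> {xs. set xs \<subseteq> {0..2*R} \<and> length xs = n - 1}"
  proof
    fix xs assume "xs \<in> phi ` ?T"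
    then obtain bs where b: "bs \<in> ?T" "xs = phi bs" by blast
    have "bs ! l + R - as0 ! l \<le> 2 * R" if "l < n - 1" for l
    proof -
      have "real (bs ! l) \<le> real (as0 ! l) + real R" using b that by (auto simp: abs_le_iff)
      hence "bs ! l \<le> as0 ! l + R" by linarith
      thus ?thesis by linarith
    qed
    thus "xs \<in> {xs. set xs \<subseteq> {0..2*R} \<and> length xs = n - 1}"
      using b unfolding phi_def by auto
  qed
  have "card ?T = card (phi ` ?T)" using inj by (simp add: card_image)
  also have "\<dots> \<le> card {xs. set xs \<subseteq> {0..2*R} \<and> length xs = n - 1}"
    by (intro card_mono sub finite_lists_length_eq) auto
  also have "\<dots> = (2 * R + 1) ^ (n - 1)" by (subst card_lists_length_eq) auto
  finally show ?thesis .
qed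

lemma pigeon:
  assumes "finite A" "finite B" "h ` A \<subseteq> B" "\<And>b. b \<in> B \<Longrightarrow> card {a\<in>A. h a = b} \<le> M"
  shows "card A \<le> card B * M"
proof -
  have "A = (\<Union>b\<in>B. {a\<in>A. h a = b})" using assms(3) by auto
  hence "card A \<le> (\<Sum>b\<in>B. card {a\<in>A. h a = b})" using card_UN_le[OF assms(2)] by metis
  also have "\<dots> \<le> (\<Sum>b\<in>B. M)" by (intro sum_mono assms(4))
  also have "\<dots> = card B * M" by simp
  finally show ?thesis .
qed




lemma arith_contra:
  fixes N B i m :: nat
  assumes N: "N = 2 * (i+1) * 2^i * B" and B: "1 \<le> B" and m: "i + 1 \<le> m"
  shows "(i+1) * 2 * (2*N+1)^i * B < (N+1)^m"
proof -
  have "(2*N+1)^i \<le> (2*(N+1))^i" by (intro power_mono) auto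
  also have "\<dots> = 2^i * (N+1)^i" by (rule power_mult_distrib)
  finally have a: "(2*N+1)^i \<le> 2^i * (N+1)^i" .
  have "(i+1) * 2 * (2*N+1)^i * B \<le> (i+1) * 2 * (2^i * (N+1)^i) * B"
    using a by (intro mult_right_mono mult_left_mono) auto
  also have "\<dots> = N * (N+1)^i" unfolding N by (simp add: algebra_simps)
  also have "\<dots> < (N+1) * (N+1)^i" by simp
  also have "\<dots> = (N+1)^(i+1)" by simp
  also have "\<dots> \<le> (N+1)^m" using m by (intro power_increasing) auto
  finally show ?thesis .
qed

lemma miss:
  assumes n: "2 \<le> n" "i + 2 \<le> n" and K: "0 \<le> K"
    and lip: "\<And>x y j. x \<in> Sph i \<Longrightarrow> y \<in> Sph i \<Longrightarrow> \<bar>Phi x j - Phi y j\<bar> \<le> K * dd i x y"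
  shows "\<exists>q\<in>bdry n. \<forall>x\<in>Sph i. Phi x \<noteq> q"
proof (rule ccontr)
  assume "\<not> ?thesis"
  hence hit: "\<And>q. q \<in> bdry n \<Longrightarrow> \<exists>x\<in>Sph i. Phi x = q" by blast
  define R :: nat where "R = nat \<lceil>2 * real n * K * real ((i+1)^2)\<rceil>"
  define B :: nat where "B = (2*R+1)^(n-1)"
  define N :: nat where "N = 2 * (i+1) * 2^i * B"
  have B1: "1 \<le> B" unfolding B_def by simp
  have N0: "0 < N" unfolding N_def using B1 by simp
  define pick where "pick as = (SOME x. x \<in> Sph i \<and> Phi x = gq n N as)" for as
  have pick: "pick as \<in> Sph i \<and> Phi (pick as) = gq n N as" if "as \<in> Gset n N" for as
  proof -
    have "\<exists>x. x \<in> Sph i \<and> Phi x = gq n N as" using hit[OF gq_bdry[OF that N0 n(1)]] by blast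
    thus ?thesis unfolding pick_def by (rule someI_ex)
  qed
  define h where "h as = cell N i (pick as)" for as
  have "card (Gset n N) \<le> card (Cset N i) * B"
  proof (rule pigeon[OF finite_Gset finite_Cset])
    show "h ` Gset n N \<subseteq> Cset N i"
    proof (rule image_subsetI)
      fix as assume "as \<in> Gset n N"
      hence "pick as \<in> Sph i" using pick by blast
      thus "h as \<in> Cset N i" unfolding h_def by (rule cell_in)
    qed
  next
    fix b assume "b \<in> Cset N i"
    show "card {a \<in> Gset n N. h a = b} \<le> B"
    proof (cases "{a \<in> Gset n N. h a = b} = {}")
      case True thus ?thesis by (metis card.empty zero_le)
    next
      case False
      then obtain as0 where as0: "as0 \<in> Gset n N" "h as0 = b" by blast
      have sub: "{a \<in> Gset n N. h a = b} \<subseteq> {bs \<in> Gset n N. \<forall>l<n-1. \<bar>real (bs ! l) - real (as0 ! l)\<bar> \<le> real R}"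
      proof (intro subsetI CollectI conjI allI impI)
        fix bs assume bs: "bs \<in> {a \<in> Gset n N. h a = b}"
        thus "bs \<in> Gset n N" by simp
        fix l assume l: "l < n - 1"
        have ps: "pick bs \<in> Sph i" "Phi (pick bs) = gq n N bs" using pick bs by auto
        have pa: "pick as0 \<in> Sph i" "Phi (pick as0) = gq n N as0" using pick as0 by auto
        have "cell N i (pick bs) = cell N i (pick as0)" using bs as0 unfolding h_def by simp
        hence dd1: "dd i (pick bs) (pick as0) \<le> real ((i+1)^2) / real N"
          using cell_diam[OF ps(1) pa(1) N0] by simp
        have "\<bar>gq n N bs (Suc l) - gq n N as0 (Suc l)\<bar> \<le> K * dd i (pick bs) (pick as0)"
          using lip[OF ps(1) pa(1), of "Suc l"] ps pa by simp
        also have "\<dots> \<le> K * (real ((i+1)^2) / real N)" using dd1 K by (intro mult_left_mono)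
        finally have g: "\<bar>gq n N bs (Suc l) - gq n N as0 (Suc l)\<bar> \<le> K * (real ((i+1)^2) / real N)" .
        have "\<bar>real (bs ! l) - real (as0 ! l)\<bar> = 2 * real n * real N * \<bar>gq n N bs (Suc l) - gq n N as0 (Suc l)\<bar>"
          by (rule gq_close[OF l N0 n(1)])
        also have "\<dots> \<le> 2 * real n * real N * (K * (real ((i+1)^2) / real N))"
          using g by (intro mult_left_mono) auto
        also have "\<dots> = 2 * real n * K * real ((i+1)^2)" using N0 by (simp add: field_simps)
        also have "\<dots> \<le> real R" unfolding R_def by (rule real_nat_ceiling_ge)
        finally show "\<bar>real (bs ! l) - real (as0 ! l)\<bar> \<le> real R" .
      qed
      have "card {a \<in> Gset n N. h a = b} \<le> card {bs \<in> Gset n N. \<forall>l<n-1. \<bar>real (bs ! l) - real (as0 ! l)\<bar> \<le> real R}"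
        by (intro card_mono sub) (simp add: finite_Gset)
      also have "\<dots> \<le> B" unfolding B_def by (rule nbhd_card[OF as0(1)])
      finally show ?thesis .
    qed
  qed
  hence "(N+1)^(n-1) \<le> (i+1) * 2 * (2*N+1)^i * B" by (simp add: card_Gset card_Cset)
  moreover have "(i+1) * 2 * (2*N+1)^i * B < (N+1)^(n-1)"
    by (rule arith_contra[OF N_def B1]) (use n in linarith)
  ultimately show False by linarith
qed




lemma finite_delta:
  fixes P :: "nat \<Rightarrow> real \<Rightarrow> bool"
  assumes ex: "\<And>j. j \<le> n \<Longrightarrow> \<exists>d>0. P j d"
    and mono: "\<And>j d d'. P j d \<Longrightarrow> 0 < d' \<Longrightarrow> d' \<le> d \<Longrightarrow> P j d'"
  shows "\<exists>d>0. \<forall>j\<le>n. P j d"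
  using ex
proof (induction n)
  case 0 thus ?case by auto
next
  case (Suc n)
  then obtain d1 where d1: "0 < d1" "\<forall>j\<le>n. P j d1" by auto
  obtain d2 where d2: "0 < d2" "P (Suc n) d2" using Suc.prems by blast
  show ?case
  proof (intro exI[of _ "min d1 d2"] conjI allI impI)
    fix j assume "j \<le> Suc n"
    thus "P j (min d1 d2)" using d1 d2 mono by (auto simp: le_Suc_eq)
  qed (use d1 d2 in auto)
qed

lemma big_coord:
  assumes "x \<in> std_simplex n"
  shows "\<exists>j\<le>n. 1 / real (n+1) \<le> x j"
proof (rule ccontr)
  assume "\<not> ?thesis"
  hence "\<forall>j\<in>{..n}. x j < 1 / real (n+1)" by auto
  hence "(\<Sum>j\<le>n. x j) < (\<Sum>j\<le>n. 1 / real (n+1))" by (intro sum_strict_mono) auto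
  also have "\<dots> = 1" by simp
  finally show False using assms by (simp add: std_simplex_def)
qed

lemma nonconst:
  assumes x: "x \<in> bdry n" and z: "\<And>k. k \<le> n \<Longrightarrow> \<bar>z k - x k\<bar> \<le> 1 / (4 * (real n + 1))"
  shows "1 / (2 * (real n + 1)) \<le> (\<Sum>k\<le>n. z k - mn n z)"
proof -
  obtain j0 where j0: "j0 \<le> n" "x j0 = 0" using x by (auto simp: bdry_def)
  obtain j1 where j1: "j1 \<le> n" "1 / real (n+1) \<le> x j1" using x big_coord by (auto simp: bdry_def)
  have e: "1 / real (n+1) - 2 * (1 / (4 * (real n + 1))) = 1 / (2 * (real n + 1))"
  proof -
    define a where "a = real n + 1"
    have a: "0 < a" unfolding a_def by simp
    have "1 / a - 2 * (1 / (4 * a)) = 1 / (2 * a)" using a by (simp add: field_simps)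
    thus ?thesis unfolding a_def by (simp add: add.commute)
  qed
  have "z j1 - z j0 \<ge> 1 / (2 * (real n + 1))" using z[OF j0(1)] z[OF j1(1)] j0 j1 e
    unfolding abs_le_iff by linarith
  moreover have "z j1 - mn n z \<le> (\<Sum>k\<le>n. z k - mn n z)"
    using j1 by (intro member_le_sum) (auto simp: mn_le)
  moreover have "mn n z \<le> z j0" using j0 by (simp add: mn_le)
  ultimately show ?thesis by linarith
qed

lemma hom_rho:
  assumes "\<And>k. continuous_map (prod_topology (top_of_set {0..1::real}) X) euclideanreal (\<lambda>p. z p k)"
    and "\<And>p. p \<in> topspace (prod_topology (top_of_set {0..1::real}) X) \<Longrightarrow> 0 < (\<Sum>k\<le>n. z p k - mn n (z p))"
  shows "homotopic_with (\<lambda>_. True) X (subtopology (powertop_real UNIV) (bdry n))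
           (\<lambda>x. rho n (z (0,x))) (\<lambda>x. rho n (z (1,x)))"
  unfolding homotopic_with_def
  by (intro exI[of _ "\<lambda>p. rho n (z p)"] conjI cm_rho assms) auto

lemma topspace_I_sph: "topspace (prod_topology (top_of_set {0..1::real}) (nsphere i)) = {0..1} \<times> Sph i"
  by (simp add: nsphere_eq)




lemma bdry_hom_proof:
  assumes i2: "i + 2 \<le> n" and f: "continuous_map (nsphere i) (subtopology (powertop_real UNIV) (bdry n)) f"
  shows "\<exists>c\<in>bdry n. homotopic_with (\<lambda>_. True) (nsphere i) (subtopology (powertop_real UNIV) (bdry n)) f (\<lambda>_. c)"
proof -
  let ?Y = "subtopology (powertop_real UNIV) (bdry n)"
  have n2: "2 \<le> n" using i2 by simp
  have fS: "f x \<in> bdry n" if "x \<in> Sph i" for x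
    using continuous_map_image_subset_topspace[OF f] that unfolding nsphere_eq by auto
  have f01: "0 \<le> f x j \<and> f x j \<le> 1" if "x \<in> Sph i" for x j
    using fS[OF that] by (simp add: bdry_def std_simplex_def)
  have fc: "continuous_on (Sph i) (\<lambda>x. f x j)" for j
    using cm_coord[OF f, of j] unfolding nsphere_eq by simp
  define eps where "eps = 1 / (4 * (real n + 1))"
  have eps0: "0 < eps" unfolding eps_def by simp
  have "\<exists>d>0. \<forall>j\<le>n. (\<forall>x\<in>Sph i. \<forall>y\<in>Sph i. dd i x y < d \<longrightarrow> \<bar>f x j - f y j\<bar> < eps)"
  proof (rule finite_delta)
    fix j show "\<exists>d>0. \<forall>x\<in>Sph i. \<forall>y\<in>Sph i. dd i x y < d \<longrightarrow> \<bar>f x j - f y j\<bar> < eps"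
      by (rule unif_Sph[OF fc eps0])
  next
    fix j d d' assume "\<forall>x\<in>Sph i. \<forall>y\<in>Sph i. dd i x y < d \<longrightarrow> \<bar>f x j - f y j\<bar> < eps" "0 < d'" "d' \<le> d"
    thus "\<forall>x\<in>Sph i. \<forall>y\<in>Sph i. dd i x y < d' \<longrightarrow> \<bar>f x j - f y j\<bar> < eps" by auto
  qed
  then obtain \<delta> where d0: "0 < \<delta>"
    and dl: "\<And>j x y. j \<le> n \<Longrightarrow> x \<in> Sph i \<Longrightarrow> y \<in> Sph i \<Longrightarrow> dd i x y < \<delta> \<Longrightarrow> \<bar>f x j - f y j\<bar> < eps"
    by blast
  define Lc where "Lc = 1 / \<delta>"
  have Lc0: "0 \<le> Lc" unfolding Lc_def using d0 by simp
  define G where "G j x = (if j \<le> n then mcs i Lc (\<lambda>y. f y j) x else 0)" for j x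
  have Gclose: "\<bar>G j x - f x j\<bar> \<le> eps" if "x \<in> Sph i" "j \<le> n" for x j
    using mcs_props(1)[of i "\<lambda>y. f y j" \<delta> eps x] f01 d0 dl[OF that(2)] eps0 that
    unfolding G_def Lc_def by simp
  have Glip: "\<bar>G j x - G j x'\<bar> \<le> Lc * dd i x x'" if "x \<in> Sph i" "x' \<in> Sph i" for j x x'
  proof (cases "j \<le> n")
    case True
    thus ?thesis
      using mcs_props(2)[of i "\<lambda>y. f y j" \<delta> eps x x'] f01 d0 dl[OF True] eps0 that
      unfolding G_def Lc_def by simp
  next
    case False thus ?thesis unfolding G_def using Lc0 dd_nonneg by simp
  qed
  have Gc: "continuous_map (nsphere i) euclideanreal (G j)" for j
    unfolding nsphere_eq continuous_map_iff_continuous by (rule lip_cont[OF Glip Lc0])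
  define Gv where "Gv x = (\<lambda>j. G j x)" for x
  define kap where "kap = 1 / (2 * (real n + 1))"
  have kap0: "0 < kap" unfolding kap_def by simp
  have Gnc: "kap \<le> (\<Sum>k\<le>n. Gv x k - mn n (Gv x))" if "x \<in> Sph i" for x
    unfolding kap_def by (rule nonconst[OF fS[OF that]]) (use Gclose[OF that] in \<open>simp add: Gv_def eps_def\<close>)
  define Phi where "Phi x = rho n (Gv x)" for x
  define Kc where "Kc = (2 * real n + 4) * Lc / kap"
  have Kc0: "0 \<le> Kc" unfolding Kc_def using Lc0 kap0 by simp
  have lipPhi: "\<bar>Phi x j - Phi y j\<bar> \<le> Kc * dd i x y" if "x \<in> Sph i" "y \<in> Sph i" for x y j
  proof -
    have "\<bar>Phi x j - Phi y j\<bar> \<le> (2 * real n + 4) * (Lc * dd i x y) / kap"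
      unfolding Phi_def
      by (rule rho_lip[OF _ Gnc[OF that(1)] Gnc[OF that(2)] kap0]) (use Glip[OF that] in \<open>simp add: Gv_def\<close>)
    also have "\<dots> = Kc * dd i x y" unfolding Kc_def by simp
    finally show ?thesis .
  qed
  obtain q where q: "q \<in> bdry n" and qmiss: "\<And>x. x \<in> Sph i \<Longrightarrow> Phi x \<noteq> q"
    using miss[OF n2 i2 Kc0, where Phi=Phi, OF lipPhi] by blast
  define z1 where "z1 p = (\<lambda>k. (1 - fst p) * f (snd p) k + fst p * G k (snd p))" for p :: "real \<times> (nat \<Rightarrow> real)"
  define z2 where "z2 p = (\<lambda>k. (1 - fst p) * G k (snd p) - fst p * q k)" for p :: "real \<times> (nat \<Rightarrow> real)"
  have hom1: "homotopic_with (\<lambda>_. True) (nsphere i) ?Y (\<lambda>x. rho n (z1 (0,x))) (\<lambda>x. rho n (z1 (1,x)))"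
  proof (rule hom_rho)
    fix k show "continuous_map (prod_topology (top_of_set {0..1}) (nsphere i)) euclideanreal (\<lambda>p. z1 p k)"
      unfolding z1_def by (intro continuous_intros cm_fst01 cm_snd cm_coord[OF f] Gc)
  next
    fix p assume "p \<in> topspace (prod_topology (top_of_set {0..1::real}) (nsphere i))"
    hence "p \<in> {0..1} \<times> Sph i" by (simp only: topspace_I_sph)
    hence t: "0 \<le> fst p" "fst p \<le> 1" and x: "snd p \<in> Sph i" by auto
    have "\<bar>z1 p k - f (snd p) k\<bar> \<le> 1 / (4 * (real n + 1))" if "k \<le> n" for k
    proof -
      have "z1 p k - f (snd p) k = fst p * (G k (snd p) - f (snd p) k)"
        unfolding z1_def by (simp add: algebra_simps)
      hence "\<bar>z1 p k - f (snd p) k\<bar> = fst p * \<bar>G k (snd p) - f (snd p) k\<bar>"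
        using t by (simp add: abs_mult)
      also have "\<dots> \<le> 1 * eps" using t Gclose[OF x that] by (intro mult_mono) auto
      finally show ?thesis by (simp add: eps_def)
    qed
    hence "kap \<le> (\<Sum>k\<le>n. z1 p k - mn n (z1 p))" unfolding kap_def by (rule nonconst[OF fS[OF x]])
    thus "0 < (\<Sum>k\<le>n. z1 p k - mn n (z1 p))" using kap0 by linarith
  qed
  have pos2: "0 < (\<Sum>k\<le>n. z2 p k - mn n (z2 p))" if t: "0 \<le> fst p" "fst p \<le> 1" and x: "snd p \<in> Sph i" for p
  proof (rule ccontr)
    assume "\<not> ?thesis"
    hence "(\<Sum>k\<le>n. z2 p k - mn n (z2 p)) = 0" using den_nonneg[where n=n and y="z2 p"] by linarith
    hence eqc: "\<And>k. k \<le> n \<Longrightarrow> z2 p k = mn n (z2 p)" using den_zero by blast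
    define c where "c = mn n (z2 p)"
    define t where "t = fst p"
    define x where "x = snd p"
    have xS: "x \<in> Sph i" using x unfolding x_def .
    have zk: "(1 - t) * G k x - t * q k = c" if "k \<le> n" for k
      using eqc[OF that] unfolding z2_def c_def t_def x_def by simp
    have q0: "\<forall>k. 0 \<le> q k" "(\<Sum>k\<le>n. q k) = 1" "\<exists>j\<le>n. q j = 0"
      using q by (auto simp: bdry_def std_simplex_def)
    consider "t = 0" | "t = 1" | "0 < t \<and> t < 1" using t unfolding t_def by linarith
    thus False
    proof cases
      case 1
      hence "\<And>k. k \<le> n \<Longrightarrow> Gv x k = c" using zk by (simp add: Gv_def)
      hence "\<And>k. k \<le> n \<Longrightarrow> Gv x k - mn n (Gv x) = 0"
        using mn_eq[of n c "Gv x" 0] by simp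
      hence "(\<Sum>k\<le>n. Gv x k - mn n (Gv x)) = 0" by simp
      thus False using Gnc[OF xS] kap0 by linarith
    next
      case 2
      hence qk: "\<And>k. k \<le> n \<Longrightarrow> q k = - c" using zk by (simp, metis minus_minus)
      obtain j where "j \<le> n" "q j = 0" using q0 by blast
      hence "c = 0" using qk by force
      hence "(\<Sum>k\<le>n. q k) = 0" using qk by simp
      thus False using q0 by simp
    next
      case 3
      have "Phi x = q" unfolding Phi_def
      proof (rule rho_affine[OF q])
        show "0 < t / (1 - t)" using 3 by simp
        fix k assume "k \<le> n"
        have "G k x = (c + t * q k) / (1 - t)" using zk[OF \<open>k \<le> n\<close>] 3 by (simp add: field_simps)
        thus "Gv x k = c / (1 - t) + t / (1 - t) * q k" unfolding Gv_def by (simp add: add_divide_distrib)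
      qed
      thus False using qmiss[OF xS] by simp
    qed
  qed
  have hom2: "homotopic_with (\<lambda>_. True) (nsphere i) ?Y (\<lambda>x. rho n (z2 (0,x))) (\<lambda>x. rho n (z2 (1,x)))"
  proof (rule hom_rho)
    fix k show "continuous_map (prod_topology (top_of_set {0..1}) (nsphere i)) euclideanreal (\<lambda>p. z2 p k)"
      unfolding z2_def by (intro continuous_intros cm_fst01 cm_snd Gc)
  next
    fix p assume "p \<in> topspace (prod_topology (top_of_set {0..1::real}) (nsphere i))"
    hence "p \<in> {0..1} \<times> Sph i" by (simp only: topspace_I_sph)
    thus "0 < (\<Sum>k\<le>n. z2 p k - mn n (z2 p))" by (intro pos2) auto
  qed
  define c0 where "c0 = rho n (\<lambda>k. - q k)"
  have "0 < (\<Sum>k\<le>n. z2 (1, \<lambda>k. if k = 0 then 1 else 0) k - mn n (z2 (1, \<lambda>k. if k = 0 then 1 else 0)))"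
    by (rule pos2) (simp_all add: Sph_ne)
  moreover have "z2 (1, \<lambda>k. if k = 0 then 1 else 0) = (\<lambda>k. - q k)" unfolding z2_def by simp
  ultimately have c0b: "c0 \<in> bdry n" unfolding c0_def by (intro rho_bdry) simp
  have h1: "homotopic_with (\<lambda>_. True) (nsphere i) ?Y f Phi"
  proof (rule homotopic_with_eq[OF hom1])
    fix x assume "x \<in> topspace (nsphere i)"
    hence "x \<in> Sph i" by (simp add: nsphere_eq)
    have "z1 (0, x) = f x" unfolding z1_def by simp
    thus "f x = rho n (z1 (0, x))" using rho_id[OF fS[OF \<open>x \<in> Sph i\<close>]] by simp
  next
    fix x show "Phi x = rho n (z1 (1, x))" unfolding Phi_def z1_def Gv_def by simp
  qed simp
  have h2: "homotopic_with (\<lambda>_. True) (nsphere i) ?Y Phi (\<lambda>_. c0)"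
  proof (rule homotopic_with_eq[OF hom2])
    fix x show "Phi x = rho n (z2 (0, x))" unfolding Phi_def z2_def Gv_def by simp
  next
    fix x show "c0 = rho n (z2 (1, x))" unfolding c0_def z2_def by simp
  qed simp
  show ?thesis using homotopic_with_trans[OF h1 h2] c0b by blast
qed


lemma kconn_bdry:
  assumes "1 \<le> n"
  shows "k_connected (int n - 2) (subtopology (powertop_real UNIV) (bdry n))"
proof -
  have "(\<lambda>k. if k = 0 then 1 else 0) \<in> bdry n"
    using vertex_simplex[of 0 n] assms unfolding bdry_def by (intro CollectI conjI) (auto intro!: exI[of _ 1])
  moreover have "\<exists>c\<in>topspace (subtopology (powertop_real UNIV) (bdry n)).
      homotopic_with (\<lambda>_. True) (nsphere i) (subtopology (powertop_real UNIV) (bdry n)) f (\<lambda>_. c)"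
    if "int i \<le> int n - 2" "continuous_map (nsphere i) (subtopology (powertop_real UNIV) (bdry n)) f" for i f
    using bdry_hom_proof[of i n f] that by auto
  ultimately show ?thesis unfolding k_connected_def by auto
qed

theorem lemma7p3:
  fixes V :: "'v set" and m :: "'v \<Rightarrow> 'v \<Rightarrow> enat" and v1 :: 'v
    and n :: nat and w :: "('v + nat) list set"
  assumes "coxeter_diagram V m" and "v1 \<in> V" and "1 \<le> n"
    and "w \<in> cox_group (Sn V n) (gamma_m m v1)"
    and "w \<noteq> cox_unit (Sn V n) (gamma_m m v1)"
  shows "k_connected (int n - 2)
           (subtopology (powertop_real UNIV)
              (\<Union>s\<in>descent_set (Sn V n) (gamma_m m v1) w. mirror V m v1 n s))"
proof -
  define D where "D = descent_set (Sn V n) (gamma_m m v1) w"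
  obtain s0 where s0: "s0 \<in> D" using descent_nonempty[OF assms(4,5)] unfolding D_def by blast
  have DS: "D \<subseteq> Sn V n" unfolding D_def descent_set_def by blast
  show ?thesis
  proof (cases "\<exists>s\<in>D. s \<in> Sminus1 V m v1")
    case True
    then obtain s where "s \<in> D" "s \<in> Sminus1 V m v1" by blast
    hence "(\<Union>s\<in>D. mirror V m v1 n s) = std_simplex n"
    proof (intro equalityI)
      show "(\<Union>s\<in>D. mirror V m v1 n s) \<subseteq> std_simplex n"
        by (intro UN_least) (simp add: mirror_def)
      have "mirror V m v1 n s = std_simplex n" using \<open>s \<in> Sminus1 V m v1\<close> by (simp add: mirror_def)
      thus "std_simplex n \<subseteq> (\<Union>s\<in>D. mirror V m v1 n s)" using \<open>s \<in> D\<close> by blast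
    qed
    moreover have "k_connected (int n - 2) (subtopology (powertop_real UNIV) (std_simplex n))"
      by (rule kconn_star[OF vertex_simplex[of 0 n]]) (auto intro: simplex_conv vertex_simplex)
    ultimately show ?thesis unfolding D_def by simp
  next
    case False
    define J where "J = vtx_index v1 ` D"
    have XJ: "(\<Union>s\<in>D. mirror V m v1 n s) = {x \<in> std_simplex n. \<exists>j\<in>J. x j = 0}"
    proof -
      have "(\<Union>s\<in>D. mirror V m v1 n s) = (\<Union>s\<in>D. {x \<in> std_simplex n. x (vtx_index v1 s) = 0})"
        using False by (intro SUP_cong refl) (simp add: mirror_def)
      also have "\<dots> = {x \<in> std_simplex n. \<exists>j\<in>J. x j = 0}" unfolding J_def by blast
      finally show ?thesis .
    qed
    have Jn: "J \<subseteq> {..n}" using DS vtx_index_le[OF _ assms(3), of _ V v1] unfolding J_def by auto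
    have Jne: "J \<noteq> {}" using s0 unfolding J_def by auto
    show ?thesis
    proof (cases "\<exists>j0\<le>n. j0 \<notin> J")
      case True
      then obtain j0 where j0: "j0 \<le> n" "j0 \<notin> J" by blast
      have c: "(\<lambda>k. if k = j0 then 1 else 0) \<in> {x \<in> std_simplex n. \<exists>j\<in>J. x j = 0}"
        using vertex_simplex[OF j0(1)] Jne j0 by auto
      have "k_connected (int n - 2) (subtopology (powertop_real UNIV) {x \<in> std_simplex n. \<exists>j\<in>J. x j = 0})"
        by (rule kconn_star[OF c]) (rule star_facets[OF Jn j0])
      thus ?thesis using XJ unfolding D_def by simp
    next
      case False
      hence "J = {..n}" using Jn by auto
      hence "(\<Union>s\<in>D. mirror V m v1 n s) = bdry n" using XJ unfolding bdry_def by auto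
      thus ?thesis using kconn_bdry[OF assms(3)] unfolding D_def by simp
    qed
  qed
qed


end
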